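(* Let $R$ be an indecomposable commutative unital ring, $X$ a locally compact Hausdorff zero-dimensional space, and $S$ an inverse semigroup. If $\alpha=(\{D_s\}_{s\in S},\{\alpha_s\}_{s\in S})$ is an algebraic partial action of $S$ on $A_R(X)$ such that each ideal $D_s$ has local units, then there is a topological partial action $\theta=(\{X_s\}_{s\in S},\{\theta_s\}_{s\in S})$ of $S$ on $X$ such that $\alpha$ is the dual partial action of $\theta$.
   Context: $A_R(X)$ is the $R$-algebra of locally constant compactly supported functions $X\to R$ with pointwise operations. $R$ is indecomposable if its only idempotents are $0,1$. A ring has local units if every finite subset $F$ admits an idempotent $e$ with $r=er=re$ for $r\in F$. Inverse semigroups: $E(S)$ idempotents, $s\le t$ iff $s=ts^*s$; $\mathcal{I}(Z)$ is the inverse semigroup of partial bijections of a set $Z$; a partial homomorphism $\varphi$ satisfies $\varphi(s^* )=\varphi(s)^*$, $\varphi(s)\varphi(t)\le\varphi(st)$, $s\le t\Rightarrow\varphi(s)\le\varphi(t)$. An algebraic partial action of $S$ on an $R$-algebra $A$: ideals $D_s$, $R$-algebra isomorphisms $\alpha_s:D_{s^*}\to D_s$, $s\mapsto\alpha_s$ a partial homomorphism $S\to\mathcal{I}(A)$, and $A=\operatorname{span}_R\bigcup_{e\in E(S)}D_e$. A topological partial action of $S$ on $X$: open $X_s$, homeomorphisms $\theta_s:X_{s^*}\to X_s$, $s\mapsto\theta_s$ a partial homomorphism $S\to\mathcal{I}(X)$, $X=\bigcup_{e\in E(S)}X_e$. Its dual partial action on $A_R(X)$: $D_s=\{f:\operatorname{supp}f\subseteq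 X_s\}$, $\alpha_s(f)=f\circ\theta_{s^*}$ on $X_s$, extended by zero. *)

theory Defs
  imports "HOL-Analysis.Analysis"
begin

definition indecomposable_ring :: "'r::comm_ring_1 itself \<Rightarrow> bool" where
  "indecomposable_ring _ \<longleftrightarrow> (\<forall>e::'r. e * e = e \<longrightarrow> e = 0 \<or> e = 1)"

definition locally_compact_space_ty :: "'x::topological_space itself \<Rightarrow> bool" where
  "locally_compact_space_ty _ \<longleftrightarrow>
     (\<forall>x::'x. \<exists>U K. open U \<and> compact K \<and> x \<in> U \<and> U \<subseteq> K)"

definition zero_dimensional_ty :: "'x::topological_space itself \<Rightarrow> bool" where
  "zero_dimensional_ty _ \<longleftrightarrow>
     (\<forall>U (x::'x). open U \<and> x \<in> U \<longrightarrow> (\<exists>V. open V \<and> closed V \<and> x \<in> V \<and> V \<subseteq> U))"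

definition supp :: "('x \<Rightarrow> 'r::zero) \<Rightarrow> 'x set" where
  "supp f = {x. f x \<noteq> 0}"

definition locally_constant :: "('x::topological_space \<Rightarrow> 'r) \<Rightarrow> bool" where
  "locally_constant f \<longleftrightarrow> (\<forall>x. \<exists>U. open U \<and> x \<in> U \<and> (\<forall>y\<in>U. f y = f x))"

definition A_R :: "('x::topological_space \<Rightarrow> 'r::comm_ring_1) set" where
  "A_R = {f. locally_constant f \<and> compact (closure (supp f))}"

definition inverse_semigroup :: "('s \<Rightarrow> 's \<Rightarrow> 's) \<Rightarrow> ('s \<Rightarrow> 's) \<Rightarrow> bool" where
  "inverse_semigroup mul st \<longleftrightarrow>
     (\<forall>a b c. mul (mul a b) c = mul a (mul b c)) \<and>
     (\<forall>s. mul (mul s (st s)) s = s) \<and>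
     (\<forall>s. mul (mul (st s) s) (st s) = st s) \<and>
     (\<forall>e f. mul e e = e \<and> mul f f = f \<longrightarrow> mul e f = mul f e)"

definition idems :: "('s \<Rightarrow> 's \<Rightarrow> 's) \<Rightarrow> 's set" where
  "idems mul = {e. mul e e = e}"

definition isg_le :: "('s \<Rightarrow> 's \<Rightarrow> 's) \<Rightarrow> ('s \<Rightarrow> 's) \<Rightarrow> 's \<Rightarrow> 's \<Rightarrow> bool" where
  "isg_le mul st s t \<longleftrightarrow> s = mul t (mul (st s) s)"

text \<open>A family of partial bijections phi_s : Dom (s^*) -> Dom s of a set Z (given by
  the sets Dom s and maps f s, only relevant on Dom (s^*)) forming a partial
  homomorphism S -> I(Z): phi(s^*) = phi(s)^*, phi(s) phi(t) \<le> phi(st), and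
  s \<le> t implies phi(s) \<le> phi(t) (order of I(Z) = restriction).\<close>
definition partial_hom_pb ::
  "('s \<Rightarrow> 's \<Rightarrow> 's) \<Rightarrow> ('s \<Rightarrow> 's) \<Rightarrow> ('s \<Rightarrow> 'z set) \<Rightarrow> ('s \<Rightarrow> 'z \<Rightarrow> 'z) \<Rightarrow> bool" where
  "partial_hom_pb mul st Dom f \<longleftrightarrow>
     (\<forall>s. bij_betw (f s) (Dom (st s)) (Dom s)) \<and>
     (\<forall>s. \<forall>a\<in>Dom (st s). f (st s) (f s a) = a) \<and>
     (\<forall>s t a. a \<in> Dom (st t) \<and> f t a \<in> Dom (st s) \<longrightarrow>
          a \<in> Dom (st (mul s t)) \<and> f (mul s t) a = f s (f t a)) \<and>
     (\<forall>s t. isg_le mul st s t \<longrightarrow>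
          Dom (st s) \<subseteq> Dom (st t) \<and> (\<forall>a\<in>Dom (st s). f s a = f t a))"

definition alg_ideal :: "('x::topological_space \<Rightarrow> 'r::comm_ring_1) set \<Rightarrow> bool" where
  "alg_ideal I \<longleftrightarrow> I \<subseteq> A_R \<and> (\<lambda>_. 0) \<in> I \<and>
     (\<forall>f\<in>I. \<forall>g\<in>I. (\<lambda>x. f x + g x) \<in> I) \<and>
     (\<forall>f\<in>I. (\<lambda>x. - f x) \<in> I) \<and>
     (\<forall>c. \<forall>f\<in>I. (\<lambda>x. c * f x) \<in> I) \<and>
     (\<forall>f\<in>I. \<forall>g\<in>A_R. (\<lambda>x. g x * f x) \<in> I \<and> (\<lambda>x. f x * g x) \<in> I)"

definition alg_iso_on :: "(('x \<Rightarrow> 'r::comm_ring_1) \<Rightarrow> ('x \<Rightarrow> 'r)) \<Rightarrow> ('x \<Rightarrow> 'r) set \<Rightarrow> ('x \<Rightarrow> 'r) set \<Rightarrow> bool" where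
  "alg_iso_on h I J \<longleftrightarrow> bij_betw h I J \<and>
     (\<forall>f\<in>I. \<forall>g\<in>I. h (\<lambda>x. f x + g x) = (\<lambda>x. h f x + h g x)) \<and>
     (\<forall>f\<in>I. \<forall>g\<in>I. h (\<lambda>x. f x * g x) = (\<lambda>x. h f x * h g x)) \<and>
     (\<forall>c. \<forall>f\<in>I. h (\<lambda>x. c * f x) = (\<lambda>x. c * h f x))"

definition has_local_units :: "('x \<Rightarrow> 'r::comm_ring_1) set \<Rightarrow> bool" where
  "has_local_units I \<longleftrightarrow> (\<forall>F. finite F \<and> F \<subseteq> I \<longrightarrow>
     (\<exists>e\<in>I. (\<lambda>x. e x * e x) = e \<and>
        (\<forall>r\<in>F. (\<lambda>x. e x * r x) = r \<and> (\<lambda>x. r x * e x) = r)))"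

definition alg_partial_action ::
  "('s \<Rightarrow> 's \<Rightarrow> 's) \<Rightarrow> ('s \<Rightarrow> 's) \<Rightarrow> ('s \<Rightarrow> ('x::topological_space \<Rightarrow> 'r::comm_ring_1) set)
    \<Rightarrow> ('s \<Rightarrow> ('x \<Rightarrow> 'r) \<Rightarrow> ('x \<Rightarrow> 'r)) \<Rightarrow> bool" where
  "alg_partial_action mul st D \<alpha> \<longleftrightarrow>
     (\<forall>s. alg_ideal (D s)) \<and>
     (\<forall>s. alg_iso_on (\<alpha> s) (D (st s)) (D s)) \<and>
     partial_hom_pb mul st D \<alpha> \<and>
     (\<forall>g\<in>A_R. \<exists>F c. finite F \<and> F \<subseteq> (\<Union>e\<in>idems mul. D e) \<and>
         g = (\<lambda>x. \<Sum>h\<in>F. c h * h x))"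

definition top_partial_action ::
  "('s \<Rightarrow> 's \<Rightarrow> 's) \<Rightarrow> ('s \<Rightarrow> 's) \<Rightarrow> ('s \<Rightarrow> 'x::topological_space set) \<Rightarrow> ('s \<Rightarrow> 'x \<Rightarrow> 'x) \<Rightarrow> bool" where
  "top_partial_action mul st Xs \<theta> \<longleftrightarrow>
     (\<forall>s. open (Xs s)) \<and>
     (\<forall>s. \<exists>g. homeomorphism (Xs (st s)) (Xs s) (\<theta> s) g) \<and>
     partial_hom_pb mul st Xs \<theta> \<and>
     (\<Union>e\<in>idems mul. Xs e) = UNIV"

definition is_dual_action ::
  "('s \<Rightarrow> 's) \<Rightarrow> ('s \<Rightarrow> 'x::topological_space set) \<Rightarrow> ('s \<Rightarrow> 'x \<Rightarrow> 'x)
    \<Rightarrow> ('s \<Rightarrow> ('x \<Rightarrow> 'r::comm_ring_1) set) \<Rightarrow> ('s \<Rightarrow> ('x \<Rightarrow> 'r) \<Rightarrow> ('x \<Rightarrow> 'r)) \<Rightarrow> bool" where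
  "is_dual_action st Xs \<theta> D \<alpha> \<longleftrightarrow>
     (\<forall>s. D s = {f\<in>A_R. supp f \<subseteq> Xs s}) \<and>
     (\<forall>s. \<forall>f\<in>D (st s). \<alpha> s f = (\<lambda>x. if x \<in> Xs s then f (\<theta> (st s) x) else 0))"

end

theory Submission
  imports Defs
begin

definition ind :: "'x set \<Rightarrow> 'x \<Rightarrow> 'r::comm_ring_1" where
  "ind K = (\<lambda>x. if x \<in> K then 1 else 0)"

lemma idem01:
  assumes "indecomposable_ring TYPE('r::comm_ring_1)" "(e::'r) * e = e"
  shows "e = 0 \<or> e = 1"
  using assms unfolding indecomposable_ring_def by blast

lemma lc_open:
  assumes "locally_constant f"
  shows "open {x. P (f x)}"
proof (subst open_subopen, intro ballI)
  fix x assume x: "x \<in> {x. P (f x)}"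
  from assms obtain U where U: "open U" "x \<in> U" "\<forall>y\<in>U. f y = f x"
    unfolding locally_constant_def by blast
  have "U \<subseteq> {x. P (f x)}"
  proof
    fix y assume "y \<in> U"
    then have "f y = f x" using U(3) by blast
    then show "y \<in> {x. P (f x)}" using x by simp
  qed
  then show "\<exists>T. open T \<and> x \<in> T \<and> T \<subseteq> {x. P (f x)}" using U by blast
qed

lemma lc_closed:
  assumes "locally_constant f"
  shows "closed {x. P (f x)}"
proof -
  have "open {x. \<not> P (f x)}" using lc_open[OF assms] .
  moreover have "- {x. P (f x)} = {x. \<not> P (f x)}" by auto
  ultimately show ?thesis unfolding closed_def by simp
qed

lemma A_R_supp:
  assumes "(f::'x::topological_space \<Rightarrow> 'r::comm_ring_1) \<in> A_R"
  shows "open (supp f)" "closed (supp f)" "compact (supp f)"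
proof -
  have lc: "locally_constant f" using assms by (simp add: A_R_def)
  show o: "open (supp f)" unfolding supp_def using lc_open[OF lc, of "\<lambda>v. v \<noteq> 0"] by simp
  show c: "closed (supp f)" unfolding supp_def using lc_closed[OF lc, of "\<lambda>v. v \<noteq> 0"] by simp
  show "compact (supp f)" using assms c by (simp add: A_R_def closure_closed)
qed

lemma supp_ind: "supp (ind K :: 'x \<Rightarrow> 'r::comm_ring_1) = K"
  by (auto simp: supp_def ind_def)

lemma ind_A_R:
  assumes "compact K" "open (K::'x::t2_space set)"
  shows "(ind K :: 'x \<Rightarrow> 'r::comm_ring_1) \<in> A_R"
proof -
  have cl: "closed K" using assms compact_imp_closed by blast
  have "locally_constant (ind K :: 'x \<Rightarrow> 'r)"
    unfolding locally_constant_def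
  proof
    fix x
    show "\<exists>U. open U \<and> x \<in> U \<and> (\<forall>y\<in>U. (ind K :: 'x \<Rightarrow> 'r) y = ind K x)"
    proof (cases "x \<in> K")
      case True then show ?thesis using assms by (intro exI[of _ K]) (auto simp: ind_def)
    next
      case False then show ?thesis using cl by (intro exI[of _ "- K"]) (auto simp: ind_def closed_def)
    qed
  qed
  then show ?thesis using assms cl by (simp add: A_R_def supp_ind closure_closed)
qed

lemma nbhd:
  assumes lc: "locally_compact_space_ty TYPE('x::t2_space)"
    and zd: "zero_dimensional_ty TYPE('x)"
    and "open W" "(x::'x) \<in> W"
  shows "\<exists>K. compact K \<and> open K \<and> x \<in> K \<and> K \<subseteq> W"
proof -
  obtain U0 K0 where "open U0" "compact K0" "x \<in> U0" "U0 \<subseteq> K0"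
    using lc unfolding locally_compact_space_ty_def by blast
  then obtain V where V: "open V" "closed V" "x \<in> V" "V \<subseteq> W \<inter> U0"
    using zd assms(3,4) unfolding zero_dimensional_ty_def
    by (metis IntI open_Int)
  have "compact (K0 \<inter> V)" using compact_Int_closed \<open>compact K0\<close> V by blast
  moreover have "K0 \<inter> V = V" using V \<open>U0 \<subseteq> K0\<close> by blast
  ultimately show ?thesis using V by auto
qed

lemma sep:
  assumes lc: "locally_compact_space_ty TYPE('x::t2_space)"
    and zd: "zero_dimensional_ty TYPE('x)"
    and "open W" "(x::'x) \<in> W" "x \<noteq> y"
  shows "\<exists>K. compact K \<and> open K \<and> x \<in> K \<and> K \<subseteq> W \<and> y \<notin> K"
proof -
  have "open (W - {y})" using assms(3) by (simp add: open_Diff)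
  then show ?thesis using nbhd[OF lc zd, of "W - {y}" x] assms by auto
qed


lemma ind_mult: "(\<lambda>x. (ind K :: 'x \<Rightarrow> 'r::comm_ring_1) x * ind L x) = ind (K \<inter> L)"
  by (auto simp: ind_def)

lemma ind_split: "(ind K :: 'x \<Rightarrow> 'r::comm_ring_1) = (\<lambda>x. ind (K \<inter> L) x + ind (K - L) x)"
  by (auto simp: ind_def)

lemma ind_empty: "(ind {} :: 'x \<Rightarrow> 'r::comm_ring_1) = (\<lambda>x. 0)"
  by (auto simp: ind_def)

locale PA =
  fixes mul :: "'s \<Rightarrow> 's \<Rightarrow> 's" and st :: "'s \<Rightarrow> 's"
    and D :: "'s \<Rightarrow> ('x::t2_space \<Rightarrow> 'r::comm_ring_1) set"
    and \<alpha> :: "'s \<Rightarrow> ('x \<Rightarrow> 'r) \<Rightarrow> ('x \<Rightarrow> 'r)"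
  assumes indec: "indecomposable_ring TYPE('r)"
    and lcs: "locally_compact_space_ty TYPE('x)"
    and zd: "zero_dimensional_ty TYPE('x)"
    and isg: "inverse_semigroup mul st"
    and apa: "alg_partial_action mul st D \<alpha>"
    and lu: "\<forall>s. has_local_units (D s)"
begin

lemma st_st: "st (st s) = s"
proof -
  define a where "a = st s"
  define y where "y = st a"
  have A: "\<And>p q r. mul (mul p q) r = mul p (mul q r)" using isg unfolding inverse_semigroup_def by blast
  have ax2: "\<And>p. mul (mul p (st p)) p = p" using isg unfolding inverse_semigroup_def by blast
  have ax3: "\<And>p. mul (mul (st p) p) (st p) = st p" using isg unfolding inverse_semigroup_def by blast
  have com: "\<And>e f. mul e e = e \<Longrightarrow> mul f f = f \<Longrightarrow> mul e f = mul f e"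
    using isg unfolding inverse_semigroup_def by blast
  have 1: "mul s (mul a s) = s" using ax2[of s] A a_def by metis
  have 2: "mul a (mul s a) = a" using ax3[of s] A a_def by metis
  have 3: "mul a (mul y a) = a" using ax2[of a] A y_def by metis
  have 4: "mul y (mul a y) = y" using ax3[of a] A y_def by metis
  have i1: "mul (mul s a) (mul s a) = mul s a" using 2 A by metis
  have i2: "mul (mul y a) (mul y a) = mul y a" using 3 A by metis
  have i3: "mul (mul a s) (mul a s) = mul a s" using 1 A by metis
  have i4: "mul (mul a y) (mul a y) = mul a y" using 4 A by metis
  have c1: "mul (mul s a) (mul y a) = mul (mul y a) (mul s a)" using com i1 i2 by blast
  have c2: "mul (mul a s) (mul a y) = mul (mul a y) (mul a s)" using com i3 i4 by blast
  have "s = mul s (mul a s)" using 1 by simp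
  also have "\<dots> = mul s (mul (mul a (mul y a)) s)" using 3 by simp
  also have "\<dots> = mul (mul (mul s a) (mul y a)) s" using A by metis
  also have "\<dots> = mul (mul (mul y a) (mul s a)) s" using c1 by simp
  also have "\<dots> = mul y (mul a (mul s (mul a s)))" using A by metis
  also have "\<dots> = mul y (mul a s)" using 1 by simp
  finally have xs: "s = mul y (mul a s)" .
  have "y = mul y (mul a y)" using 4 by simp
  also have "\<dots> = mul y (mul (mul a (mul s a)) y)" using 2 by simp
  also have "\<dots> = mul y (mul (mul a s) (mul a y))" using A by metis
  also have "\<dots> = mul y (mul (mul a y) (mul a s))" using c2 by simp
  also have "\<dots> = mul (mul y (mul a y)) (mul a s)" using A by metis
  also have "\<dots> = mul y (mul a s)" using 4 by simp
  finally have "y = mul y (mul a s)" .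
  with xs show ?thesis unfolding y_def a_def by simp
qed

lemma ideal: "alg_ideal (D s)" using apa unfolding alg_partial_action_def by blast
lemma iso: "alg_iso_on (\<alpha> s) (D (st s)) (D s)" using apa unfolding alg_partial_action_def by blast
lemma pb: "partial_hom_pb mul st D \<alpha>" using apa unfolding alg_partial_action_def by blast

definition U :: "'s \<Rightarrow> 'x set" where "U s = \<Union> (supp ` D s)"

lemma D_A: "f \<in> D s \<Longrightarrow> f \<in> A_R" using ideal[of s] unfolding alg_ideal_def by blast

lemma D_supp: "f \<in> D s \<Longrightarrow> supp f \<subseteq> U s" unfolding U_def by blast

lemma U_open: "open (U s)" unfolding U_def using A_R_supp(1)[OF D_A] by blast

lemma D_mult: "f \<in> D s \<Longrightarrow> g \<in> A_R \<Longrightarrow> (\<lambda>x. g x * f x) \<in> D s"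
  using ideal[of s] unfolding alg_ideal_def by blast

lemma D_memI:
  assumes f: "f \<in> A_R" and sf: "supp f \<subseteq> U s"
  shows "f \<in> D s"
proof -
  have "compact (supp f)" using A_R_supp(3)[OF f] .
  moreover have "\<And>g. g \<in> D s \<Longrightarrow> open (supp g)" using A_R_supp(1)[OF D_A] .
  moreover have "supp f \<subseteq> (\<Union>g\<in>D s. supp g)" using sf unfolding U_def .
  ultimately obtain G where G: "G \<subseteq> D s" "finite G" "supp f \<subseteq> (\<Union>g\<in>G. supp g)"
    by (rule compactE_image)
  obtain e where e: "e \<in> D s" "(\<lambda>x. e x * e x) = e"
    "\<forall>r\<in>G. (\<lambda>x. e x * r x) = r \<and> (\<lambda>x. r x * e x) = r"
    using lu G unfolding has_local_units_def by meson
  have e1: "e x = 1" if xf: "x \<in> supp f" for x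
  proof -
    obtain g where g: "g \<in> G" "x \<in> supp g" using G(3) xf by blast
    have "e x * g x = g x" using e(3) g(1) by metis
    moreover have "e x * e x = e x" using e(2) by metis
    ultimately show ?thesis using idem01[OF indec] g(2) unfolding supp_def by force
  qed
  have "(\<lambda>x. f x * e x) = f"
  proof
    fix x show "f x * e x = f x"
      using e1[of x] by (cases "x \<in> supp f") (auto simp: supp_def)
  qed
  moreover have "(\<lambda>x. f x * e x) \<in> D s" using D_mult[OF e(1) f] .
  ultimately show ?thesis by simp
qed

lemma D_char: "D s = {f \<in> A_R. supp f \<subseteq> U s}"
  using D_A D_supp D_memI by blast

lemma ind_D: "compact K \<Longrightarrow> open K \<Longrightarrow> K \<subseteq> U s \<Longrightarrow> ind K \<in> D s"
  using D_memI ind_A_R supp_ind by metis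

lemma zero_D: "(\<lambda>x. 0) \<in> D s" using ideal[of s] unfolding alg_ideal_def by blast

lemma \<alpha>_in: "f \<in> D (st s) \<Longrightarrow> \<alpha> s f \<in> D s"
  using iso[of s] unfolding alg_iso_on_def bij_betw_def by blast

lemma \<alpha>_inv: "f \<in> D (st s) \<Longrightarrow> \<alpha> (st s) (\<alpha> s f) = f"
  using pb unfolding partial_hom_pb_def by blast

lemma \<alpha>_inv2: "g \<in> D s \<Longrightarrow> \<alpha> (st s) g \<in> D (st s) \<and> \<alpha> s (\<alpha> (st s) g) = g"
  using \<alpha>_in[of g "st s"] \<alpha>_inv[of g "st s"] st_st[of s] by simp

lemma \<alpha>_add: "f \<in> D (st s) \<Longrightarrow> g \<in> D (st s) \<Longrightarrow> \<alpha> s (\<lambda>x. f x + g x) = (\<lambda>x. \<alpha> s f x + \<alpha> s g x)"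
  using iso[of s] unfolding alg_iso_on_def by blast
lemma \<alpha>_mul: "f \<in> D (st s) \<Longrightarrow> g \<in> D (st s) \<Longrightarrow> \<alpha> s (\<lambda>x. f x * g x) = (\<lambda>x. \<alpha> s f x * \<alpha> s g x)"
  using iso[of s] unfolding alg_iso_on_def by blast
lemma \<alpha>_smul: "f \<in> D (st s) \<Longrightarrow> \<alpha> s (\<lambda>x. c * f x) = (\<lambda>x. c * \<alpha> s f x)"
  using iso[of s] unfolding alg_iso_on_def by blast

lemma \<alpha>_zero: "\<alpha> s (\<lambda>x. 0) = (\<lambda>x. 0)"
proof -
  have "\<alpha> s (\<lambda>x. 0 + 0) = (\<lambda>x. \<alpha> s (\<lambda>x. 0) x + \<alpha> s (\<lambda>x. 0) x)"
    using \<alpha>_add[OF zero_D zero_D] .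
  then have "\<And>x. \<alpha> s (\<lambda>x. 0) x = \<alpha> s (\<lambda>x. 0) x + \<alpha> s (\<lambda>x. 0) x" by (metis add_0)
  then show ?thesis by auto
qed

end

context PA begin

lemma ind01: "K \<subseteq> U s \<Longrightarrow> compact K \<Longrightarrow> open K \<Longrightarrow> \<alpha> t (ind K) x = 0 \<or> \<alpha> t (ind K) x = 1"
  if "s = st t" for s t K x
proof -
  assume K: "K \<subseteq> U s" "compact K" "open K"
  have iK: "ind K \<in> D (st t)" using ind_D[OF K(2,3) K(1)] that by simp
  have "\<alpha> t (\<lambda>x. ind K x * ind K x) = (\<lambda>x. \<alpha> t (ind K) x * \<alpha> t (ind K) x)"
    using \<alpha>_mul[OF iK iK] .
  then have "\<alpha> t (ind K) x * \<alpha> t (ind K) x = \<alpha> t (ind K) x"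
    using ind_mult[of K K] by (metis Int_absorb)
  then show ?thesis using idem01[OF indec] by blast
qed

lemma char:
  assumes xU: "x \<in> U t"
  shows "\<exists>y\<in>U (st t). \<forall>g\<in>D (st t). g y = \<alpha> t g x"
proof -
  define V where "V = U (st t)"
  define \<phi> where "\<phi> g = \<alpha> t g x" for g
  have indV: "ind K \<in> D (st t)" if "compact K" "open K" "K \<subseteq> V" for K
    using ind_D that unfolding V_def by blast
  have \<phi>01: "\<phi> (ind K) = 0 \<or> \<phi> (ind K) = 1" if "compact K" "open K" "K \<subseteq> V" for K
    using ind01[of "st t" t K x] that unfolding \<phi>_def V_def by blast
  have \<phi>mul: "\<phi> (\<lambda>z. f z * g z) = \<phi> f * \<phi> g" if "f \<in> D (st t)" "g \<in> D (st t)" for f g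
    using \<alpha>_mul[OF that] unfolding \<phi>_def by simp
  have \<phi>add: "\<phi> (\<lambda>z. f z + g z) = \<phi> f + \<phi> g" if "f \<in> D (st t)" "g \<in> D (st t)" for f g
    using \<alpha>_add[OF that] unfolding \<phi>_def by simp
  have \<phi>smul: "\<phi> (\<lambda>z. c * f z) = c * \<phi> f" if "f \<in> D (st t)" for f c
    using \<alpha>_smul[OF that] unfolding \<phi>_def by simp
  have \<phi>0: "\<phi> (ind {}) = 0" unfolding \<phi>_def ind_empty \<alpha>_zero by simp
  obtain K where K: "compact K" "open K" "x \<in> K" "K \<subseteq> U t"
    using nbhd[OF lcs zd U_open xU] by blast
  have iK: "ind K \<in> D t" using ind_D K by blast
  define g0 where "g0 = \<alpha> (st t) (ind K)"
  have g0: "g0 \<in> D (st t)" "\<alpha> t g0 = ind K" using \<alpha>_inv2[OF iK] unfolding g0_def by auto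
  have pg0: "\<phi> g0 = 1" unfolding \<phi>_def g0(2) using K(3) by (simp add: ind_def)
  define K0 where "K0 = supp g0"
  have K0: "compact K0" "open K0" "K0 \<subseteq> V"
    using A_R_supp[OF D_A[OF g0(1)]] D_supp[OF g0(1)] unfolding K0_def V_def by auto
  have "(\<lambda>z. g0 z * ind K0 z) = g0" by (auto simp: K0_def ind_def supp_def)
  then have "\<phi> g0 = \<phi> g0 * \<phi> (ind K0)" using \<phi>mul[OF g0(1) indV[OF K0]] by simp
  then have pK0: "\<phi> (ind K0) = 1" using pg0 by simp
  define F where "F = {L. compact L \<and> open L \<and> L \<subseteq> V \<and> \<phi> (ind L) = 1}"
  have K0F: "K0 \<in> F" unfolding F_def using K0 pK0 by blast
  have FInt: "A \<inter> B \<in> F" if "A \<in> F" "B \<in> F" for A B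
  proof -
    have A: "compact A" "open A" "A \<subseteq> V" "\<phi> (ind A) = 1" and B: "compact B" "open B" "B \<subseteq> V" "\<phi> (ind B) = 1"
      using that unfolding F_def by auto
    have "\<phi> (ind (A \<inter> B)) = \<phi> (ind A) * \<phi> (ind B)"
      using \<phi>mul[OF indV[OF A(1-3)] indV[OF B(1-3)]] unfolding ind_mult .
    moreover have "compact (A \<inter> B)" using A(1) B(1) compact_Int_closed compact_imp_closed by blast
    ultimately show ?thesis unfolding F_def using A B by auto
  qed
  have Fne: "L \<noteq> {}" if "L \<in> F" for L
    using that \<phi>0 unfolding F_def by auto
  have fin: "K0 \<inter> \<Inter>F' \<in> F" if "finite F'" "F' \<subseteq> F" for F'
    using that
  proof (induction F' rule: finite_induct)
    case empty then show ?case using K0F by simp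
  next
    case (insert L F')
    then have "L \<inter> (K0 \<inter> \<Inter>F') \<in> F" using FInt by blast
    moreover have "K0 \<inter> \<Inter>(insert L F') = L \<inter> (K0 \<inter> \<Inter>F')" by auto
    ultimately show ?case by simp
  qed
  have "K0 \<inter> \<Inter>F \<noteq> {}"
  proof (rule compact_imp_fip[OF K0(1)])
    show "closed T" if "T \<in> F" for T using that compact_imp_closed unfolding F_def by blast
    show "K0 \<inter> \<Inter>F' \<noteq> {}" if "finite F'" "F' \<subseteq> F" for F' using fin[OF that] Fne by blast
  qed
  then obtain y where y: "y \<in> K0" "\<And>L. L \<in> F \<Longrightarrow> y \<in> L" by blast
  have yV: "y \<in> V" using y(1) K0(3) by blast
  have pind: "\<phi> (ind L) = ind L y" if L: "compact L" "open L" "L \<subseteq> V" for L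
  proof (cases "y \<in> L")
    case True
    have c1: "compact (K0 \<inter> L)" using K0(1) L(1) compact_Int_closed compact_imp_closed by blast
    have c2: "compact (K0 - L)"
    proof -
      have "closed (- L)" using L(2) by (simp add: closed_def)
      then have "compact (K0 \<inter> - L)" using K0(1) compact_Int_closed by blast
      then show ?thesis by (simp add: Diff_eq)
    qed
    have o2: "open (K0 - L)" using K0(2) compact_imp_closed[OF L(1)] by (rule open_Diff)
    have o1: "open (K0 \<inter> L)" using K0(2) L(2) by blast
    have s1: "K0 \<inter> L \<subseteq> V" "K0 - L \<subseteq> V" using K0(3) by auto
    have a: "\<phi> (ind K0) = \<phi> (ind (K0 \<inter> L)) + \<phi> (ind (K0 - L))"
      using \<phi>add[OF indV[OF c1 o1 s1(1)] indV[OF c2 o2 s1(2)]] unfolding ind_split[of K0 L, symmetric] .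
    have ne: "\<phi> (ind (K0 - L)) \<noteq> 1"
    proof
      assume "\<phi> (ind (K0 - L)) = 1"
      then have "K0 - L \<in> F" unfolding F_def using c2 o2 s1 by blast
      then show False using y(2) True by blast
    qed
    have b: "\<phi> (ind (K0 - L)) = 0" using \<phi>01[OF c2 o2 s1(2)] ne by blast
    have c: "\<phi> (ind (K0 \<inter> L)) = 1" using a b pK0 by simp
    have d: "\<phi> (ind (K0 \<inter> L)) = \<phi> (ind K0) * \<phi> (ind L)"
      using \<phi>mul[OF indV[OF K0] indV[OF L]] unfolding ind_mult .
    have e: "\<phi> (ind L) = 1" using c d pK0 by simp
    have "ind L y = (1::'r)" using True by (simp add: ind_def)
    then show ?thesis using e by simp
  next
    case False
    have "\<phi> (ind L) \<noteq> 1"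
    proof
      assume "\<phi> (ind L) = 1"
      then have "L \<in> F" unfolding F_def using L by blast
      then show False using y(2) False by blast
    qed
    then have "\<phi> (ind L) = 0" using \<phi>01[OF L] by blast
    moreover have "ind L y = (0::'r)" using False by (simp add: ind_def)
    ultimately show ?thesis by simp
  qed
  have "g y = \<phi> g" if g: "g \<in> D (st t)" for g
  proof -
    define c where "c = g y"
    define L where "L = K0 \<inter> {z. g z = c}"
    have lcg: "locally_constant g" using D_A[OF g] by (simp add: A_R_def)
    have Lc: "compact L" unfolding L_def using compact_Int_closed[OF K0(1) lc_closed[OF lcg, of "\<lambda>v. v = c"]] .
    have Lo: "open L" unfolding L_def using K0(2) lc_open[OF lcg, of "\<lambda>v. v = c"] by blast
    have LV: "L \<subseteq> V" unfolding L_def using K0(3) by blast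
    have yL: "y \<in> L" unfolding L_def c_def using y(1) by blast
    have iLy: "ind L y = (1::'r)" using yL by (simp add: ind_def)
    have pL: "\<phi> (ind L) = 1" using pind[OF Lc Lo LV] unfolding iLy .
    have e: "(\<lambda>z. g z * ind L z) = (\<lambda>z. c * ind L z)" by (auto simp: ind_def L_def)
    have "\<phi> g * \<phi> (ind L) = \<phi> (\<lambda>z. c * ind L z)"
      using \<phi>mul[OF g indV[OF Lc Lo LV]] unfolding e by simp
    also have "\<dots> = c * \<phi> (ind L)" using \<phi>smul[OF indV[OF Lc Lo LV], of c] .
    finally have "\<phi> g * \<phi> (ind L) = c * \<phi> (ind L)" .
    then show ?thesis using pL unfolding c_def by simp
  qed
  then show ?thesis using yV unfolding V_def \<phi>_def by blast
qed

end

context PA begin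

definition \<theta> :: "'s \<Rightarrow> 'x \<Rightarrow> 'x" where
  "\<theta> s x = (THE y. y \<in> U s \<and> (\<forall>f\<in>D (st s). \<alpha> s f y = f x))"

lemma \<theta>_ex:
  assumes "x \<in> U (st s)"
  shows "\<exists>y\<in>U s. \<forall>f\<in>D (st s). \<alpha> s f y = f x"
proof -
  obtain y where y: "y \<in> U s" "\<forall>g\<in>D s. g y = \<alpha> (st s) g x"
    using char[OF assms] st_st[of s] by auto
  have "\<alpha> s f y = f x" if f: "f \<in> D (st s)" for f
  proof -
    have "\<alpha> s f y = \<alpha> (st s) (\<alpha> s f) x" using y(2) \<alpha>_in[OF f] by blast
    then show ?thesis using \<alpha>_inv[OF f] by simp
  qed
  then show ?thesis using y(1) by blast
qed

lemma \<theta>_uniq: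
  assumes "y \<in> U s" "y' \<in> U s" "\<forall>f\<in>D (st s). \<alpha> s f y = f x" "\<forall>f\<in>D (st s). \<alpha> s f y' = f x"
  shows "y = y'"
proof (rule ccontr)
  assume ne: "y \<noteq> y'"
  obtain K where K: "compact K" "open K" "y \<in> K" "K \<subseteq> U s" "y' \<notin> K"
    using sep[OF lcs zd U_open assms(1) ne] by blast
  have iK: "ind K \<in> D s" using ind_D K by blast
  define f where "f = \<alpha> (st s) (ind K)"
  have f: "f \<in> D (st s)" "\<alpha> s f = ind K" using \<alpha>_inv2[OF iK] unfolding f_def by auto
  have "\<alpha> s f y = f x" "\<alpha> s f y' = f x" using assms(3,4) f(1) by blast+
  then have "ind K y = (ind K y' :: 'r)" using f(2) by simp
  then show False using K(3,5) by (simp add: ind_def)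
qed

lemma \<theta>_prop:
  assumes "x \<in> U (st s)"
  shows "\<theta> s x \<in> U s \<and> (\<forall>f\<in>D (st s). \<alpha> s f (\<theta> s x) = f x)"
proof -
  have "\<exists>!y. y \<in> U s \<and> (\<forall>f\<in>D (st s). \<alpha> s f y = f x)"
    using \<theta>_ex[OF assms] \<theta>_uniq by blast
  then show ?thesis unfolding \<theta>_def by (rule theI')
qed

lemma \<theta>_eq:
  assumes "x \<in> U (st s)" "y \<in> U s" "\<forall>f\<in>D (st s). \<alpha> s f y = f x"
  shows "\<theta> s x = y"
  using \<theta>_uniq[OF _ assms(2) _ assms(3)] \<theta>_prop[OF assms(1)] by blast

lemma \<theta>_inv:
  assumes x: "x \<in> U (st s)"
  shows "\<theta> (st s) (\<theta> s x) = x"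
proof -
  have y: "\<theta> s x \<in> U (st (st s))" using \<theta>_prop[OF x] st_st by simp
  have "\<alpha> (st s) g x = g (\<theta> s x)" if g: "g \<in> D (st (st s))" for g
  proof -
    have g': "g \<in> D s" using g st_st by simp
    have "\<alpha> s (\<alpha> (st s) g) (\<theta> s x) = \<alpha> (st s) g x"
      using \<theta>_prop[OF x] \<alpha>_inv2[OF g'] by blast
    then show ?thesis using \<alpha>_inv2[OF g'] by simp
  qed
  then show ?thesis using \<theta>_eq[OF y x] by simp
qed

lemma \<theta>_inv': "y \<in> U s \<Longrightarrow> \<theta> s (\<theta> (st s) y) = y"
  using \<theta>_inv[of y "st s"] st_st[of s] by simp

lemma \<theta>_in: "x \<in> U (st s) \<Longrightarrow> \<theta> s x \<in> U s"
  using \<theta>_prop by blast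

lemma \<theta>_in': "y \<in> U s \<Longrightarrow> \<theta> (st s) y \<in> U (st s)"
  using \<theta>_in[of y "st s"] st_st[of s] by simp

lemma \<theta>_bij: "bij_betw (\<theta> s) (U (st s)) (U s)"
proof (rule bij_betw_byWitness[where f'="\<theta> (st s)"])
  show "\<forall>a\<in>U (st s). \<theta> (st s) (\<theta> s a) = a" using \<theta>_inv by blast
  show "\<forall>a'\<in>U s. \<theta> s (\<theta> (st s) a') = a'" using \<theta>_inv' by blast
  show "\<theta> s ` U (st s) \<subseteq> U s" using \<theta>_in by blast
  show "\<theta> (st s) ` U s \<subseteq> U (st s)" using \<theta>_in' by blast
qed

lemma \<theta>_cont: "continuous_on (U (st s)) (\<theta> s)"
  unfolding continuous_on_topological
proof (intro ballI allI impI)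
  fix x B assume x: "x \<in> U (st s)" and B: "open B" "\<theta> s x \<in> B"
  have "open (B \<inter> U s)" using B(1) U_open by blast
  then obtain K where K: "compact K" "open K" "\<theta> s x \<in> K" "K \<subseteq> B \<inter> U s"
    using nbhd[OF lcs zd, of "B \<inter> U s" "\<theta> s x"] B(2) \<theta>_in[OF x] by blast
  have iK: "ind K \<in> D s" using ind_D K by blast
  define f where "f = \<alpha> (st s) (ind K)"
  have f: "f \<in> D (st s)" "\<alpha> s f = ind K" using \<alpha>_inv2[OF iK] unfolding f_def by auto
  have lcf: "locally_constant f" using D_A[OF f(1)] by (simp add: A_R_def)
  have fz: "f z = ind K (\<theta> s z)" if "z \<in> U (st s)" for z
  proof -
    have "\<alpha> s f (\<theta> s z) = f z" using \<theta>_prop[OF that] f(1) by blast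
    then show ?thesis using f(2) by simp
  qed
  have o: "open {z. f z = 1}" using lc_open[OF lcf, of "\<lambda>v. v = 1"] .
  have "ind K (\<theta> s x) = (1::'r)" using K(3) unfolding ind_def by simp
  then have xin: "x \<in> {z. f z = 1}" using fz[OF x] by simp
  have "\<theta> s y \<in> B" if y: "y \<in> U (st s)" "y \<in> {z. f z = 1}" for y
  proof -
    have "f y = 1" using y(2) by simp
    then have "ind K (\<theta> s y) = (1::'r)" using fz[OF y(1)] by simp
    then have "\<theta> s y \<in> K" unfolding ind_def by (cases "\<theta> s y \<in> K") simp_all
    then show "\<theta> s y \<in> B" using K(4) by blast
  qed
  then show "\<exists>A. open A \<and> x \<in> A \<and> (\<forall>y\<in>U (st s). y \<in> A \<longrightarrow> \<theta> s y \<in> B)"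
    using o xin by blast
qed

lemma \<theta>_homeo: "homeomorphism (U (st s)) (U s) (\<theta> s) (\<theta> (st s))"
proof -
  have c2: "continuous_on (U s) (\<theta> (st s))" using \<theta>_cont[of "st s"] unfolding st_st .
  have i1: "\<theta> s ` U (st s) = U s" using \<theta>_bij[of s] by (rule bij_betw_imp_surj_on)
  have i2: "\<theta> (st s) ` U s = U (st s)" using \<theta>_bij[of "st s"] unfolding st_st by (rule bij_betw_imp_surj_on)
  have i3: "\<forall>x\<in>U (st s). \<theta> (st s) (\<theta> s x) = x" using \<theta>_inv by blast
  have i4: "\<forall>y\<in>U s. \<theta> s (\<theta> (st s) y) = y" using \<theta>_inv' by blast
  show ?thesis unfolding homeomorphism_def using \<theta>_cont[of s] c2 i1 i2 i3 i4 by simp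
qed

end

context PA begin

lemma pb_comp: "f \<in> D (st t) \<Longrightarrow> \<alpha> t f \<in> D (st s) \<Longrightarrow> f \<in> D (st (mul s t)) \<and> \<alpha> (mul s t) f = \<alpha> s (\<alpha> t f)"
  using pb unfolding partial_hom_pb_def by blast

lemma pb_le: "isg_le mul st s t \<Longrightarrow> D (st s) \<subseteq> D (st t) \<and> (\<forall>f\<in>D (st s). \<alpha> s f = \<alpha> t f)"
  using pb unfolding partial_hom_pb_def by blast

lemma supp_mult_sub: "supp (\<lambda>z. (ind L :: 'x \<Rightarrow> 'r) z * h z) \<subseteq> L"
  by (auto simp: supp_def ind_def)

lemma mult_ind_D:
  assumes h: "h \<in> D s" and L: "compact L" "open L" "L \<subseteq> U s'"
  shows "(\<lambda>z. ind L z * h z) \<in> D s \<and> (\<lambda>z. ind L z * h z) \<in> D s'"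
proof -
  have a: "(\<lambda>z. ind L z * h z) \<in> D s" using D_mult[OF h ind_A_R[OF L(1,2)]] .
  have "supp (\<lambda>z. ind L z * h z) \<subseteq> U s'" using supp_mult_sub[of L h] L(3) by blast
  then have "(\<lambda>z. ind L z * h z) \<in> D s'" using D_memI[OF D_A[OF a]] by blast
  then show ?thesis using a by blast
qed

lemma \<theta>_comp:
  assumes a: "a \<in> U (st t)" and b: "\<theta> t a \<in> U (st s)"
  shows "a \<in> U (st (mul s t)) \<and> \<theta> (mul s t) a = \<theta> s (\<theta> t a)"
proof -
  define b where "b = \<theta> t a"
  have bt: "b \<in> U t" unfolding b_def using \<theta>_in[OF a] .
  have bs: "b \<in> U (st s)" using b unfolding b_def .
  have key: "\<alpha> (st t) g \<in> D (st (mul s t)) \<and> \<alpha> (mul s t) (\<alpha> (st t) g) = \<alpha> s g \<and> \<alpha> (st t) g a = g b"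
    if g: "g \<in> D t" "g \<in> D (st s)" for g
  proof -
    have f: "\<alpha> (st t) g \<in> D (st t)" "\<alpha> t (\<alpha> (st t) g) = g" using \<alpha>_inv2[OF g(1)] by auto
    have c: "\<alpha> (st t) g \<in> D (st (mul s t)) \<and> \<alpha> (mul s t) (\<alpha> (st t) g) = \<alpha> s (\<alpha> t (\<alpha> (st t) g))"
      using pb_comp[OF f(1)] f(2) g(2) by simp
    have "\<alpha> t (\<alpha> (st t) g) (\<theta> t a) = \<alpha> (st t) g a" using \<theta>_prop[OF a] f(1) by blast
    then have "\<alpha> (st t) g a = g b" using f(2) unfolding b_def by simp
    then show ?thesis using c f(2) by simp
  qed
  have "open (U t \<inter> U (st s))" using U_open by blast
  then obtain L where L: "compact L" "open L" "b \<in> L" "L \<subseteq> U t \<inter> U (st s)"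
    using nbhd[OF lcs zd, of "U t \<inter> U (st s)" b] bt bs by blast
  have Lt: "ind L \<in> D t" using ind_D L by blast
  have Ls: "ind L \<in> D (st s)" using ind_D L by blast
  have indLb: "ind L b = (1::'r)" using L(3) by (simp add: ind_def)
  define fL where "fL = \<alpha> (st t) (ind L)"
  have fL: "fL \<in> D (st (mul s t))" "\<alpha> (mul s t) fL = \<alpha> s (ind L)" "fL a = 1"
    using key[OF Lt Ls] indLb unfolding fL_def by auto
  have "a \<in> supp fL" using fL(3) by (simp add: supp_def)
  then have aU: "a \<in> U (st (mul s t))" using D_supp[OF fL(1)] by blast
  define y where "y = \<theta> (mul s t) a"
  have y: "y \<in> U (mul s t)" "\<forall>h\<in>D (st (mul s t)). \<alpha> (mul s t) h y = h a"
    using \<theta>_prop[OF aU] unfolding y_def by auto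
  have gy: "\<alpha> s g y = g b" if g: "g \<in> D t" "g \<in> D (st s)" for g
  proof -
    have k: "\<alpha> (st t) g \<in> D (st (mul s t))" "\<alpha> (mul s t) (\<alpha> (st t) g) = \<alpha> s g" "\<alpha> (st t) g a = g b"
      using key[OF g] by auto
    have "\<alpha> (mul s t) (\<alpha> (st t) g) y = \<alpha> (st t) g a" using y(2) k(1) by blast
    then show ?thesis using k(2,3) by simp
  qed
  have sL: "\<alpha> s (ind L) y = 1" using gy[OF Lt Ls] indLb by simp
  then have "y \<in> supp (\<alpha> s (ind L))" by (simp add: supp_def)
  then have ys: "y \<in> U s" using D_supp[OF \<alpha>_in[OF Ls]] by blast
  have "\<alpha> s h y = h b" if h: "h \<in> D (st s)" for h
  proof -
    have g': "(\<lambda>z. ind L z * h z) \<in> D (st s)" "(\<lambda>z. ind L z * h z) \<in> D t"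
      using mult_ind_D[OF h L(1,2), of t] L(4) by auto
    have "\<alpha> s (\<lambda>z. ind L z * h z) = (\<lambda>z. \<alpha> s (ind L) z * \<alpha> s h z)" using \<alpha>_mul[OF Ls h] .
    then have "\<alpha> s (\<lambda>z. ind L z * h z) y = \<alpha> s h y" using sL by simp
    moreover have "\<alpha> s (\<lambda>z. ind L z * h z) y = ind L b * h b" using gy[OF g'(2) g'(1)] by simp
    ultimately show ?thesis using indLb by simp
  qed
  then have "\<theta> s b = y" using \<theta>_eq[OF bs ys] by blast
  then show ?thesis using aU unfolding y_def b_def by simp
qed

lemma \<theta>_le:
  assumes le: "isg_le mul st s t"
  shows "U (st s) \<subseteq> U (st t) \<and> (\<forall>a\<in>U (st s). \<theta> s a = \<theta> t a)"
proof -
  have p: "D (st s) \<subseteq> D (st t)" "\<forall>f\<in>D (st s). \<alpha> s f = \<alpha> t f" using pb_le[OF le] by auto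
  have sub: "U (st s) \<subseteq> U (st t)" unfolding U_def using p(1) by blast
  have "\<theta> t a = \<theta> s a" if a: "a \<in> U (st s)" for a
  proof -
    define y where "y = \<theta> s a"
    have y: "y \<in> U s" "\<forall>f\<in>D (st s). \<alpha> s f y = f a" using \<theta>_prop[OF a] unfolding y_def by auto
    obtain L where L: "compact L" "open L" "a \<in> L" "L \<subseteq> U (st s)"
      using nbhd[OF lcs zd U_open a] by blast
    have Ls: "ind L \<in> D (st s)" using ind_D L by blast
    have Lt: "ind L \<in> D (st t)" using Ls p(1) by blast
    have indLa: "ind L a = (1::'r)" using L(3) by (simp add: ind_def)
    have eqL: "\<alpha> t (ind L) = \<alpha> s (ind L)" using p(2) Ls by simp
    have tL: "\<alpha> t (ind L) y = 1" using y(2) Ls eqL indLa by simp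
    then have "y \<in> supp (\<alpha> t (ind L))" by (simp add: supp_def)
    then have yt: "y \<in> U t" using D_supp[OF \<alpha>_in[OF Lt]] by blast
    have "\<alpha> t f y = f a" if f: "f \<in> D (st t)" for f
    proof -
      have g': "(\<lambda>z. ind L z * f z) \<in> D (st t)" "(\<lambda>z. ind L z * f z) \<in> D (st s)"
        using mult_ind_D[OF f L(1,2) L(4)] by auto
      have "\<alpha> t (\<lambda>z. ind L z * f z) = (\<lambda>z. \<alpha> t (ind L) z * \<alpha> t f z)" using \<alpha>_mul[OF Lt f] .
      then have "\<alpha> t (\<lambda>z. ind L z * f z) y = \<alpha> t f y" using tL by simp
      moreover have "\<alpha> t (\<lambda>z. ind L z * f z) = \<alpha> s (\<lambda>z. ind L z * f z)" using p(2) g'(2) by simp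
      moreover have "\<alpha> s (\<lambda>z. ind L z * f z) y = ind L a * f a" using y(2) g'(2) by simp
      ultimately show ?thesis using indLa by simp
    qed
    then have "\<theta> t a = y" using \<theta>_eq[OF _ yt] sub a by blast
    then show ?thesis unfolding y_def .
  qed
  then show ?thesis using sub by simp
qed

lemma U_cover: "(\<Union>e\<in>idems mul. U e) = UNIV"
proof (rule set_eqI, rule iffI)
  fix x :: 'x assume "x \<in> UNIV"
  obtain K where K: "compact K" "open K" "x \<in> K" "K \<subseteq> UNIV"
    using nbhd[OF lcs zd, of UNIV x] by blast
  have "(ind K :: 'x \<Rightarrow> 'r) \<in> A_R" using ind_A_R K by blast
  then obtain F c where F: "finite F" "F \<subseteq> (\<Union>e\<in>idems mul. D e)" "ind K = (\<lambda>x. \<Sum>h\<in>F. c h * h x)"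
    using apa unfolding alg_partial_action_def by blast
  have "(\<Sum>h\<in>F. c h * h x) = (1::'r)" using F(3) K(3) unfolding ind_def by metis
  then have "\<exists>h\<in>F. c h * h x \<noteq> 0" by (metis (mono_tags, lifting) sum.neutral zero_neq_one)
  then obtain h where h: "h \<in> F" "h x \<noteq> 0" by force
  then obtain e where e: "e \<in> idems mul" "h \<in> D e" using F(2) by blast
  have "x \<in> supp h" using h(2) by (simp add: supp_def)
  then have "x \<in> U e" using D_supp[OF e(2)] by blast
  then show "x \<in> (\<Union>e\<in>idems mul. U e)" using e(1) by blast
qed simp

lemma dual: "f \<in> D (st s) \<Longrightarrow> \<alpha> s f = (\<lambda>x. if x \<in> U s then f (\<theta> (st s) x) else 0)"
proof -
  assume f: "f \<in> D (st s)"
  show ?thesis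
  proof
    fix x show "\<alpha> s f x = (if x \<in> U s then f (\<theta> (st s) x) else 0)"
    proof (cases "x \<in> U s")
      case True
      define z where "z = \<theta> (st s) x"
      have z: "z \<in> U (st s)" "\<theta> s z = x" using \<theta>_in'[OF True] \<theta>_inv'[OF True] unfolding z_def by auto
      have "\<alpha> s f (\<theta> s z) = f z" using \<theta>_prop[OF z(1)] f by blast
      then show ?thesis using True z(2) unfolding z_def by simp
    next
      case False
      have "supp (\<alpha> s f) \<subseteq> U s" using D_supp[OF \<alpha>_in[OF f]] .
      then have "\<alpha> s f x = 0" using False unfolding supp_def by blast
      then show ?thesis using False by simp
    qed
  qed
qed

end

theorem proposition6p4:
  fixes mul :: "'s \<Rightarrow> 's \<Rightarrow> 's" and st :: "'s \<Rightarrow> 's"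
    and D :: "'s \<Rightarrow> ('x::t2_space \<Rightarrow> 'r::comm_ring_1) set"
    and \<alpha> :: "'s \<Rightarrow> ('x \<Rightarrow> 'r) \<Rightarrow> ('x \<Rightarrow> 'r)"
  assumes "indecomposable_ring TYPE('r)"
    and "locally_compact_space_ty TYPE('x)"
    and "zero_dimensional_ty TYPE('x)"
    and "inverse_semigroup mul st"
    and "alg_partial_action mul st D \<alpha>"
    and "\<forall>s. has_local_units (D s)"
  shows "\<exists>Xs \<theta>. top_partial_action mul st Xs \<theta> \<and> is_dual_action st Xs \<theta> D \<alpha>"
proof -
  interpret P: PA mul st D \<alpha> using assms by (simp add: PA_def)
  have hp: "partial_hom_pb mul st P.U P.\<theta>"
    unfolding partial_hom_pb_def
  proof (intro conjI allI ballI impI)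
    fix s show "bij_betw (P.\<theta> s) (P.U (st s)) (P.U s)" by (rule P.\<theta>_bij)
  next
    fix s a assume "a \<in> P.U (st s)" then show "P.\<theta> (st s) (P.\<theta> s a) = a" by (rule P.\<theta>_inv)
  next
    fix s t a assume "a \<in> P.U (st t) \<and> P.\<theta> t a \<in> P.U (st s)"
    then show "a \<in> P.U (st (mul s t))" using P.\<theta>_comp by blast
  next
    fix s t a assume "a \<in> P.U (st t) \<and> P.\<theta> t a \<in> P.U (st s)"
    then show "P.\<theta> (mul s t) a = P.\<theta> s (P.\<theta> t a)" using P.\<theta>_comp by blast
  next
    fix s t assume "isg_le mul st s t" then show "P.U (st s) \<subseteq> P.U (st t)" using P.\<theta>_le by blast
  next
    fix s t a assume "isg_le mul st s t" "a \<in> P.U (st s)"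
    then show "P.\<theta> s a = P.\<theta> t a" using P.\<theta>_le by blast
  qed
  have "\<exists>g. homeomorphism (P.U (st s)) (P.U s) (P.\<theta> s) g" for s
    using P.\<theta>_homeo by blast
  then have tpa: "top_partial_action mul st P.U P.\<theta>"
    unfolding top_partial_action_def using P.U_open hp P.U_cover by blast
  have dua: "is_dual_action st P.U P.\<theta> D \<alpha>"
    unfolding is_dual_action_def using P.D_char P.dual by blast
  show ?thesis using tpa dua by blast
qed

end
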